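(* Let $K=1$ and fix a reflection matrix $\mathbf\Phi$ such that (SDR1.2) has an optimal solution. Then problem (P1.1) has an optimal solution $(\mathbf w_1,\mathbf R_0)$ whose dedicated sensing covariance lies in the null space of the user channel, i.e. $\mathbf h_1^H\mathbf R_0\mathbf h_1=0$.
   Context: Let $M,N\ge1$ be integers and $K=1$. Fixed data: $\mathbf G\in\mathbb C^{N\times M}$, $\mathbf h_{\mathrm d,1}\in\mathbb C^{M}$, $\mathbf h_{\mathrm r,1}\in\mathbb C^{N}$, threshold $\Gamma_1>0$, noise power $\sigma_1^2>0$, power budget $P_0>0$. A reflection matrix is $\mathbf\Phi=\mathrm{diag}(\mathbf v)$ with $\mathbf v\in\mathbb C^N$, $|v_n|=1$ for all $n$; put $\mathbf h_1=\mathbf h_{\mathrm d,1}+\mathbf G^H\mathbf\Phi^H\mathbf h_{\mathrm r,1}$ and $\mathbf H_1=\mathbf h_1\mathbf h_1^H$. The Type-I SINR is $\gamma_1^{\mathrm I}=|\mathbf h_1^H\mathbf w_1|^2/(\mathbf h_1^H\mathbf R_0\mathbf h_1+\sigma_1^2)$ for $\mathbf w_1\in\mathbb C^M$ and Hermitian $\mathbf R_0\succeq\mathbf 0$. For Hermitian $\mathbf X\succeq\mathbf 0$ define $f(\mathbf X)=\mathrm{tr}\big((\mathbf G\mathbf X\mathbf G^H)^{-1}\big)$ if $\mathbf G\mathbf X\mathbf G^H$ is invertible and $+\infty$ otherwise. Problem (P1.1): minimize $f(\mathbf w_1\mathbf w_1^H+\mathbf R_0)$ over $\mathbf w_1,\mathbf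 R_0\succeq\mathbf 0$ subject to $\gamma_1^{\mathrm I}\ge\Gamma_1$ and $\|\mathbf w_1\|^2+\mathrm{tr}(\mathbf R_0)\le P_0$. Problem (SDR1.2): minimize $f(\mathbf W_1+\mathbf R_0)$ over Hermitian $\mathbf W_1\succeq\mathbf 0,\mathbf R_0\succeq\mathbf 0$ subject to $(1+\tfrac1{\Gamma_1})\mathrm{tr}(\mathbf H_1\mathbf W_1)-\mathrm{tr}(\mathbf H_1(\mathbf W_1+\mathbf R_0))\ge\sigma_1^2$ and $\mathrm{tr}(\mathbf W_1)+\mathrm{tr}(\mathbf R_0)\le P_0$. *)

theory Defs
  imports "HOL-Analysis.Analysis"
begin

text \<open>Complex vectors/matrices as Cartesian-product types.  A matrix
  of type complex^'c^'r has rows indexed by 'r and columns by 'c.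
  M antennas correspond to the index type 'm, N RIS elements to 'n.\<close>

definition cadj :: "complex^'c^'r \<Rightarrow> complex^'r^'c" where
  "cadj A = (\<chi> i j. cnj (A $ j $ i))"

definition cvinner :: "complex^'n \<Rightarrow> complex^'n \<Rightarrow> complex" where
  "cvinner x y = (\<Sum>i\<in>UNIV. cnj (x $ i) * y $ i)"

definition outer :: "complex^'n \<Rightarrow> complex^'n^'n" where
  "outer w = (\<chi> i j. w $ i * cnj (w $ j))"

definition hermitian :: "complex^'n^'n \<Rightarrow> bool" where
  "hermitian X \<longleftrightarrow> cadj X = X"

definition psd :: "complex^'n^'n \<Rightarrow> bool" where
  "psd X \<longleftrightarrow> hermitian X \<and> (\<forall>x. 0 \<le> Re (cvinner x (X *v x)))"

definition cvnorm2 :: "complex^'n \<Rightarrow> real" where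
  "cvnorm2 w = (\<Sum>i\<in>UNIV. (cmod (w $ i))\<^sup>2)"

definition reflection :: "complex^'n \<Rightarrow> complex^'n^'n" where
  "reflection v = (\<chi> i j. if i = j then v $ i else 0)"

definition eff_channel ::
  "complex^'m^'n \<Rightarrow> complex^'m \<Rightarrow> complex^'n \<Rightarrow> complex^'n \<Rightarrow> complex^'m" where
  "eff_channel G hd1 hr1 v = hd1 + cadj G *v (cadj (reflection v) *v hr1)"

definition fobj :: "complex^'m^'n \<Rightarrow> complex^'m^'m \<Rightarrow> ereal" where
  "fobj G X = (if invertible (G ** X ** cadj G)
               then ereal (Re (trace (matrix_inv (G ** X ** cadj G)))) else \<infinity>)"

definition P11_feasible ::
  "complex^'m \<Rightarrow> real \<Rightarrow> real \<Rightarrow> real \<Rightarrow> complex^'m \<Rightarrow> complex^'m^'m \<Rightarrow> bool" where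
  "P11_feasible h \<Gamma> \<sigma>2 P0 w R0 \<longleftrightarrow>
     psd R0 \<and>
     (cmod (cvinner h w))\<^sup>2 / (Re (cvinner h (R0 *v h)) + \<sigma>2) \<ge> \<Gamma> \<and>
     cvnorm2 w + Re (trace R0) \<le> P0"

definition SDR12_feasible ::
  "complex^'m \<Rightarrow> real \<Rightarrow> real \<Rightarrow> real \<Rightarrow> complex^'m^'m \<Rightarrow> complex^'m^'m \<Rightarrow> bool" where
  "SDR12_feasible h \<Gamma> \<sigma>2 P0 W1 R0 \<longleftrightarrow>
     psd W1 \<and> psd R0 \<and>
     (1 + 1 / \<Gamma>) * Re (trace (outer h ** W1)) - Re (trace (outer h ** (W1 + R0))) \<ge> \<sigma>2 \<and>
     Re (trace W1) + Re (trace R0) \<le> P0"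

end

theory Submission
  imports Defs
begin

lemma cvinner_mv: "cvinner x (A *v y) = (\<Sum>i\<in>UNIV. \<Sum>j\<in>UNIV. cnj (x$i) * (A$i$j * y$j))"
  by (simp add: cvinner_def matrix_vector_mult_def sum_distrib_left)

lemma herm_swap:
  assumes "hermitian A"
  shows "cvinner y (A *v x) = cnj (cvinner x (A *v y))"
proof -
  have h: "\<And>i j. cnj (A$i$j) = A$j$i"
    using assms unfolding hermitian_def cadj_def by (metis vec_lambda_beta)
  have "cnj (cvinner x (A *v y)) = (\<Sum>i\<in>UNIV. \<Sum>j\<in>UNIV. x$i * (cnj (A$i$j) * cnj (y$j)))"
    by (simp add: cvinner_mv)
  also have "\<dots> = (\<Sum>i\<in>UNIV. \<Sum>j\<in>UNIV. x$i * (A$j$i * cnj (y$j)))"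
    by (simp only: h)
  also have "\<dots> = (\<Sum>j\<in>UNIV. \<Sum>i\<in>UNIV. x$i * (A$j$i * cnj (y$j)))"
    by (rule sum.swap)
  also have "\<dots> = cvinner y (A *v x)"
    by (simp add: cvinner_mv mult_ac)
  finally show ?thesis by simp
qed

lemma herm_real:
  assumes "hermitian A"
  shows "cvinner x (A *v x) = complex_of_real (Re (cvinner x (A *v x)))"
  using herm_swap[OF assms, of x x] by (simp add: complex_eq_iff)

lemma cvinner_comm: "cvinner w x = cnj (cvinner x w)"
  by (simp add: cvinner_def mult.commute)

lemma cvinner_diff_left: "cvinner (x - c *s h) y = cvinner x y - cnj c * cvinner h y"
  by (simp add: cvinner_def sum_distrib_left sum_subtractf algebra_simps)

lemma cvinner_diff_right: "cvinner y (x - c *s h) = cvinner y x - c * cvinner y h"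
  by (simp add: cvinner_def sum_distrib_left sum_subtractf algebra_simps)

lemma cvinner_scale_right: "cvinner y (c *s h) = c * cvinner y h"
  by (simp add: cvinner_def sum_distrib_left algebra_simps)

lemma cvinner_scale_left: "cvinner (c *s h) y = cnj c * cvinner h y"
  by (simp add: cvinner_def sum_distrib_left algebra_simps)

lemma mv_scale: "(A::complex^'n^'m) *v (c *s x) = c *s (A *v x)"
  by (simp add: matrix_vector_mult_def vec_eq_iff sum_distrib_left algebra_simps)

lemma mv_add: "((A::complex^'n^'m) + B) *v x = A *v x + B *v x"
  by (simp add: matrix_vector_mult_def vec_eq_iff sum.distrib algebra_simps)

lemma mv_diff: "((A::complex^'n^'m) - B) *v x = A *v x - B *v x"
  by (simp add: matrix_vector_mult_def vec_eq_iff sum_subtractf algebra_simps)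

lemma cvinner_add_right: "cvinner y (x + z) = cvinner y x + cvinner y z"
  by (simp add: cvinner_def sum.distrib algebra_simps)

lemma cvinner_diff_right2: "cvinner y (x - z) = cvinner y x - cvinner y z"
  by (simp add: cvinner_def sum_subtractf algebra_simps)

lemma cvinner_outer: "cvinner x (outer w *v x) = cvinner x w * cvinner w x"
  by (simp only: cvinner_mv) (simp add: outer_def cvinner_def sum_product mult_ac)

lemma trace_outer_mult: "trace (outer h ** A) = cvinner h (A *v h)"
proof -
  have "trace (outer h ** A) = (\<Sum>i\<in>UNIV. \<Sum>k\<in>UNIV. cnj (h$k) * (A$k$i * h$i))"
    by (simp add: trace_def matrix_matrix_mult_def outer_def mult_ac)
  also have "\<dots> = (\<Sum>k\<in>UNIV. \<Sum>i\<in>UNIV. cnj (h$k) * (A$k$i * h$i))" by (rule sum.swap)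
  finally show ?thesis by (simp add: cvinner_mv)
qed

lemma trace_outer: "Re (trace (outer w)) = cvnorm2 w"
  by (simp add: trace_def outer_def cvnorm2_def complex_mult_cnj cmod_def)

lemma herm_outer: "hermitian (outer w)"
  by (simp add: hermitian_def cadj_def outer_def vec_eq_iff mult.commute)

lemma herm_add: "hermitian A \<Longrightarrow> hermitian B \<Longrightarrow> hermitian (A + B)"
  by (simp add: hermitian_def cadj_def vec_eq_iff)

lemma herm_diff: "hermitian A \<Longrightarrow> hermitian B \<Longrightarrow> hermitian (A - B)"
  by (simp add: hermitian_def cadj_def vec_eq_iff)

lemma cvinner_self_cmod: "cvinner x w * cvinner w x = complex_of_real ((cmod (cvinner x w))\<^sup>2)"
  by (metis cvinner_comm complex_norm_square)

lemma psd_outer: "psd (outer w)"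
  by (simp add: psd_def herm_outer cvinner_outer cvinner_self_cmod)

lemma P11_to_SDR:
  assumes "\<Gamma> > 0" "\<sigma>2 > 0" "P11_feasible h \<Gamma> \<sigma>2 P0 w R"
  shows "SDR12_feasible h \<Gamma> \<sigma>2 P0 (outer w) R"
proof -
  have pR: "psd R" and sinr: "(cmod (cvinner h w))\<^sup>2 / (Re (cvinner h (R *v h)) + \<sigma>2) \<ge> \<Gamma>"
    and pw: "cvnorm2 w + Re (trace R) \<le> P0"
    using assms(3) unfolding P11_feasible_def by auto
  define s where "s = (cmod (cvinner h w))\<^sup>2"
  define r where "r = Re (cvinner h (R *v h))"
  have r0: "r \<ge> 0" using pR unfolding psd_def r_def by auto
  have t1: "Re (trace (outer h ** outer w)) = s"
    unfolding trace_outer_mult cvinner_outer cvinner_self_cmod s_def by simp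
  have t2: "Re (trace (outer h ** (outer w + R))) = s + r"
    unfolding trace_outer_mult mv_add cvinner_add_right r_def
    by (simp add: cvinner_outer cvinner_self_cmod s_def)
  have "s \<ge> \<Gamma> * (r + \<sigma>2)"
    using sinr r0 assms(2) unfolding s_def[symmetric] r_def[symmetric]
    by (simp add: pos_le_divide_eq)
  hence "s / \<Gamma> \<ge> r + \<sigma>2" using assms(1) by (simp add: pos_le_divide_eq mult.commute)
  hence ineq: "(1 + 1 / \<Gamma>) * s - (s + r) \<ge> \<sigma>2" by (simp add: algebra_simps)
  show ?thesis unfolding SDR12_feasible_def using ineq t1 t2 pR pw by (simp add: psd_outer trace_outer)
qed

lemma construct:
  assumes "\<Gamma> > 0" "\<sigma>2 > 0" "SDR12_feasible h \<Gamma> \<sigma>2 P0 W R"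
  shows "\<exists>w R0. P11_feasible h \<Gamma> \<sigma>2 P0 w R0 \<and> outer w + R0 = W + R \<and> cvinner h (R0 *v h) = 0"
proof -
  have pW: "psd W" and pR: "psd R"
    and ineq: "(1 + 1 / \<Gamma>) * Re (trace (outer h ** W)) - Re (trace (outer h ** (W + R))) \<ge> \<sigma>2"
    and pw: "Re (trace W) + Re (trace R) \<le> P0"
    using assms(3) unfolding SDR12_feasible_def by auto
  define X where "X = W + R"
  have hX: "hermitian X" using pW pR herm_add unfolding psd_def X_def by blast
  define b where "b = cvinner h (X *v h)"
  define a where "a = Re b"
  have ba: "b = complex_of_real a" unfolding a_def b_def using herm_real[OF hX] by simp
  define qW where "qW = Re (cvinner h (W *v h))"
  define qR where "qR = Re (cvinner h (R *v h))"
  have qR0: "qR \<ge> 0" using pR unfolding psd_def qR_def by auto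
  have aq: "a = qW + qR" unfolding a_def b_def X_def qW_def qR_def mv_add cvinner_add_right by simp
  have "(1 + 1 / \<Gamma>) * qW - (qW + qR) \<ge> \<sigma>2"
    using ineq unfolding trace_outer_mult mv_add cvinner_add_right qW_def qR_def by simp
  hence "qW / \<Gamma> \<ge> \<sigma>2 + qR" by (simp add: algebra_simps)
  hence "qW \<ge> \<Gamma> * (\<sigma>2 + qR)" using assms(1) by (simp add: pos_le_divide_eq mult.commute)
  hence aG: "a \<ge> \<Gamma> * \<sigma>2" using aq qR0 assms(1)
    by (smt (verit) mult_nonneg_nonneg distrib_left)
  have apos: "a > 0" using aG assms by (smt (verit) mult_pos_pos)
  define u where "u = X *v h"
  define w where "w = complex_of_real (1 / sqrt a) *s u"
  define R0 where "R0 = X - outer w"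
  have sumeq: "outer w + R0 = W + R" unfolding R0_def X_def by simp
  have hw: "cvinner h w = complex_of_real (sqrt a)"
    unfolding w_def cvinner_scale_right u_def b_def[symmetric] ba using apos
    by (simp add: real_div_sqrt flip: of_real_mult of_real_divide)
  have null: "cvinner h (R0 *v h) = 0"
    unfolding R0_def mv_diff cvinner_diff_right2 cvinner_outer b_def[symmetric] ba
    using hw cvinner_comm[of w h] apos by (simp flip: of_real_mult)
  have psdR0: "psd R0"
    unfolding psd_def
  proof (intro conjI allI)
    show "hermitian R0" unfolding R0_def using hX herm_outer herm_diff by blast
    fix x
    define p where "p = cvinner h (X *v x)"
    define c where "c = p / complex_of_real a"
    define z where "z = x - c *s h"
    have xu: "cvinner x u = cnj p" unfolding u_def p_def by (rule herm_swap[OF hX])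
    have zz: "cvinner z (X *v z) = cvinner x (X *v x) - cnj c * p - c * (cnj p - cnj c * complex_of_real a)"
      unfolding z_def matrix_vector_mult_diff_distrib mv_scale cvinner_diff_right cvinner_diff_left
        p_def[symmetric] xu[unfolded u_def] b_def[symmetric] ba
      by (simp add: algebra_simps)
    have zz2: "cvinner z (X *v z) = cvinner x (X *v x) - p * cnj p / complex_of_real a"
    proof -
      have cc: "cnj c = cnj p / complex_of_real a" by (simp add: c_def)
      have ca: "cnj c * complex_of_real a = cnj p" using apos by (simp add: cc)
      show ?thesis unfolding zz ca using cc by (simp add: c_def mult.commute)
    qed
    have xw: "cvinner x w = complex_of_real (1 / sqrt a) * cnj p"
      unfolding w_def cvinner_scale_right xu by simp
    have xw2: "cvinner x w * cvinner w x = p * cnj p / complex_of_real a"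
    proof -
      have "cvinner x w * cvinner w x = complex_of_real (1 / sqrt a) * complex_of_real (1 / sqrt a) * (p * cnj p)"
        using cvinner_comm[of w x] xw by simp
      also have "complex_of_real (1 / sqrt a) * complex_of_real (1 / sqrt a) = 1 / complex_of_real a"
      proof -
        have s: "sqrt a * sqrt a = a" using apos by simp
        have "(1 / sqrt a) * (1 / sqrt a) = 1 / (sqrt a * sqrt a)" by simp
        hence e: "(1 / sqrt a) * (1 / sqrt a) = 1 / a" unfolding s .
        have "complex_of_real ((1 / sqrt a) * (1 / sqrt a)) = complex_of_real (1 / a)" by (simp only: e)
        thus ?thesis by (simp only: of_real_mult of_real_divide of_real_1)
      qed
      finally show ?thesis by simp
    qed
    have "cvinner x (R0 *v x) = cvinner z (X *v z)"
      unfolding R0_def mv_diff cvinner_diff_right2 cvinner_outer xw2 zz2 by simp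
    moreover have "0 \<le> Re (cvinner z (X *v z))"
      using pW pR unfolding psd_def X_def mv_add cvinner_add_right by (simp add: add_nonneg_nonneg)
    ultimately show "0 \<le> Re (cvinner x (R0 *v x))" by simp
  qed
  have sinr: "(cmod (cvinner h w))\<^sup>2 / (Re (cvinner h (R0 *v h)) + \<sigma>2) \<ge> \<Gamma>"
    using hw null apos aG assms(2) by (simp add: pos_le_divide_eq)
  have pow: "cvnorm2 w + Re (trace R0) \<le> P0"
    using pw unfolding trace_outer[symmetric] R0_def X_def trace_sub trace_add by simp
  have "P11_feasible h \<Gamma> \<sigma>2 P0 w R0" unfolding P11_feasible_def by (intro conjI psdR0 sinr pow)
  thus ?thesis using sumeq null by (intro exI[of _ w] exI[of _ R0]) simp
qed

theorem proposition4:
  fixes G :: "complex^'m^'n" and hd1 :: "complex^'m" and hr1 :: "complex^'n"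
    and v :: "complex^'n" and \<Gamma> \<sigma>2 P0 :: real
  assumes "\<Gamma> > 0" and "\<sigma>2 > 0" and "P0 > 0"
    and "\<forall>n. cmod (v $ n) = 1"
    and "\<exists>W1 R0. SDR12_feasible (eff_channel G hd1 hr1 v) \<Gamma> \<sigma>2 P0 W1 R0 \<and>
           (\<forall>W1' R0'. SDR12_feasible (eff_channel G hd1 hr1 v) \<Gamma> \<sigma>2 P0 W1' R0' \<longrightarrow>
              fobj G (W1 + R0) \<le> fobj G (W1' + R0'))"
  shows "\<exists>w1 R0. P11_feasible (eff_channel G hd1 hr1 v) \<Gamma> \<sigma>2 P0 w1 R0 \<and>
           (\<forall>w1' R0'. P11_feasible (eff_channel G hd1 hr1 v) \<Gamma> \<sigma>2 P0 w1' R0' \<longrightarrow>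
              fobj G (outer w1 + R0) \<le> fobj G (outer w1' + R0')) \<and>
           cvinner (eff_channel G hd1 hr1 v) (R0 *v eff_channel G hd1 hr1 v) = 0"
proof -
  define h where "h = eff_channel G hd1 hr1 v"
  obtain W R where feas: "SDR12_feasible h \<Gamma> \<sigma>2 P0 W R"
    and opt: "\<forall>W1' R0'. SDR12_feasible h \<Gamma> \<sigma>2 P0 W1' R0' \<longrightarrow> fobj G (W + R) \<le> fobj G (W1' + R0')"
    using assms(5) unfolding h_def[symmetric] by (elim exE conjE)
  obtain w R0 where f: "P11_feasible h \<Gamma> \<sigma>2 P0 w R0" and se: "outer w + R0 = W + R"
    and nz: "cvinner h (R0 *v h) = 0"
    using construct[OF assms(1,2) feas] by blast
  have "\<forall>w1' R0'. P11_feasible h \<Gamma> \<sigma>2 P0 w1' R0' \<longrightarrow> fobj G (outer w + R0) \<le> fobj G (outer w1' + R0')"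
  proof (intro allI impI)
    fix w1' R0' assume "P11_feasible h \<Gamma> \<sigma>2 P0 w1' R0'"
    hence "SDR12_feasible h \<Gamma> \<sigma>2 P0 (outer w1') R0'" by (rule P11_to_SDR[OF assms(1,2)])
    hence "fobj G (W + R) \<le> fobj G (outer w1' + R0')" using opt by blast
    thus "fobj G (outer w + R0) \<le> fobj G (outer w1' + R0')" by (simp only: se)
  qed
  hence "P11_feasible h \<Gamma> \<sigma>2 P0 w R0 \<and>
           (\<forall>w1' R0'. P11_feasible h \<Gamma> \<sigma>2 P0 w1' R0' \<longrightarrow>
              fobj G (outer w + R0) \<le> fobj G (outer w1' + R0')) \<and>
           cvinner h (R0 *v h) = 0" using f nz by blast
  thus ?thesis unfolding h_def by blast
qed

end
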